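(* Let $p\ge1$ be an integer, let $\lambda$ be a random variable with the beta distribution $\mathrm{Beta}(1,p)$, i.e. with density $p(1-t)^{p-1}$ on $[0,1]$, and let $Z$ be a random variable whose conditional distribution given $\lambda=t$ is Poisson with mean $t$ (so $Z$ has the beta-Poisson distribution). Then for every integer $n\ge0$ and every real $x$, $$\mathcal{B}_{n,p}(x)=\mathbb{E}\big[(x+Z)^n\big].$$
   Context: For an integer $p\ge0$, the $p$-Bell numbers $\mathcal{B}_{n,p}$ are defined by $\sum_{n\ge0}\mathcal{B}_{n,p}\frac{z^n}{n!}=\sum_{n\ge0}\binom{n+p}{p}^{-1}\frac{(e^z-1)^n}{n!}$, and the $p$-Bell polynomials by $\mathcal{B}_{n,p}(x)=\sum_{k=0}^n\binom nk\mathcal{B}_{k,p}x^{n-k}$. *)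

theory Defs
  imports "HOL-Probability.Probability" "HOL-Computational_Algebra.Formal_Power_Series"
begin

definition pBell_egf :: "nat \<Rightarrow> real fps" where
  "pBell_egf p = (\<Sum>k. fps_const (1 / (real ((k + p) choose p) * fact k)) * (fps_exp 1 - 1) ^ k)"

definition pBell :: "nat \<Rightarrow> nat \<Rightarrow> real" where
  "pBell n p = fact n * fps_nth (pBell_egf p) n"

definition pBell_poly :: "nat \<Rightarrow> nat \<Rightarrow> real \<Rightarrow> real" where
  "pBell_poly n p x = (\<Sum>k=0..n. real (n choose k) * pBell k p * x ^ (n - k))"

end

theory Submission
  imports Defs
begin

definition cc :: "nat \<Rightarrow> nat \<Rightarrow> real" where
  "cc j k = (\<Sum>i\<le>k. real i ^ j * (-1) ^ (k - i) / (fact i * fact (k - i)))"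

lemma fps_m1_pow: "(-1 :: real fps) ^ m = fps_const ((-1) ^ m)"
  by (metis fps_const_neg fps_const_1_eq_1 fps_const_power)

lemma fps_coeff: "fps_nth ((fps_exp (1::real) - 1) ^ k) j = fact k / fact j * cc j k"
proof -
  have "(fps_exp (1::real) - 1) ^ k = (fps_exp 1 + (-1)) ^ k" by simp
  also have "\<dots> = (\<Sum>i\<le>k. of_nat (k choose i) * fps_exp 1 ^ i * (-1) ^ (k - i))"
    by (rule binomial_ring)
  also have "\<dots> = (\<Sum>i\<le>k. fps_const (real (k choose i) * (-1) ^ (k - i)) * fps_exp (real i))"
    by (intro sum.cong refl) (simp add: fps_m1_pow fps_exp_power_mult fps_of_nat fps_const_neg [symmetric] fps_const_power fps_const_mult[symmetric] mult_ac)
  finally have "fps_nth ((fps_exp (1::real) - 1) ^ k) j = (\<Sum>i\<le>k. real (k choose i) * (-1) ^ (k - i) * (real i ^ j / fact j))"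
    by (simp add: fps_sum_nth)
  also have "\<dots> = fact k / fact j * cc j k"
    unfolding cc_def sum_distrib_left
    by (intro sum.cong refl) (simp add: binomial_fact field_simps)
  finally show ?thesis .
qed

lemma cc_zero: "j < k \<Longrightarrow> cc j k = 0"
proof -
  assume "j < k"
  then have "fps_nth ((fps_exp (1::real) - 1) ^ k) j = 0"
    using startsby_zero_power_prefix[of "fps_exp (1::real) - 1" k] by simp
  then show ?thesis by (simp add: fps_coeff)
qed

lemma pow_fact_le_exp: "0 \<le> (x::real) \<Longrightarrow> x ^ n / fact n \<le> exp x"
proof -
  assume x: "0 \<le> x"
  have s: "(\<lambda>k. x ^ k / fact k) sums exp x"
    using exp_converges[of x] by (simp add: divide_inverse mult.commute scaleR_conv_of_real)
  have "sum (\<lambda>k. x ^ k / fact k) {n} \<le> suminf (\<lambda>k. x ^ k / fact k)"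
    by (rule sum_le_suminf) (use s x in \<open>auto simp: sums_iff\<close>)
  then show ?thesis using s by (simp add: sums_iff)
qed

lemma summable_mom: "0 \<le> (r::real) \<Longrightarrow> summable (\<lambda>m. real m ^ j * r ^ m / fact m)"
proof -
  assume r: "0 \<le> r"
  have s: "summable (\<lambda>m. fact j * ((exp 1 * r) ^ m / fact m))"
    using exp_converges[of "exp 1 * r"]
    by (intro summable_mult) (simp add: sums_iff divide_inverse mult.commute scaleR_conv_of_real)
  show ?thesis
  proof (rule summable_comparison_test'[OF s])
    fix m :: nat
    have "real m ^ j \<le> fact j * exp (real m)"
      using pow_fact_le_exp[of "real m" j] by (simp add: field_simps)
    also have "exp (real m) = exp 1 ^ m" by (metis exp_of_nat_mult mult.right_neutral)
    finally have "real m ^ j * r ^ m \<le> fact j * exp 1 ^ m * r ^ m"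
      by (intro mult_right_mono) (use r in auto)
    then show "norm (real m ^ j * r ^ m / fact m) \<le> fact j * ((exp 1 * r) ^ m / fact m)"
      using r by (simp add: power_mult_distrib divide_right_mono mult_ac)
  qed
qed

lemma touchard: "(\<lambda>m. real m ^ j * t ^ m / fact m) sums (exp t * (\<Sum>k\<le>j. cc j k * t ^ k))"
proof -
  define a where "a m = real m ^ j * t ^ m / fact m" for m
  define b where "b = (\<lambda>m. (- t) ^ m / fact m)"
  have sa: "summable (\<lambda>m. norm (a m))"
    using summable_mom[of "\<bar>t\<bar>" j] by (simp add: a_def abs_mult power_abs)
  have bs: "b sums exp (- t)"
    using exp_converges[of "-t"] by (simp add: b_def divide_inverse mult.commute scaleR_conv_of_real)
  have sb: "summable (\<lambda>m. norm (b m))"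
    using exp_converges[of "\<bar>t\<bar>"]
    by (simp add: b_def sums_iff divide_inverse mult.commute scaleR_conv_of_real abs_mult power_abs)
  have inner: "(\<Sum>i\<le>k. a i * b (k - i)) = cc j k * t ^ k" for k
  proof -
    have "(\<Sum>i\<le>k. a i * b (k - i)) = (\<Sum>i\<le>k. real i ^ j * (-1) ^ (k - i) / (fact i * fact (k - i)) * t ^ k)"
    proof (intro sum.cong refl)
      fix i assume "i \<in> {..k}"
      then have "t ^ i * t ^ (k - i) = t ^ k" by (simp flip: power_add)
      then show "a i * b (k - i) = real i ^ j * (-1) ^ (k - i) / (fact i * fact (k - i)) * t ^ k"
        unfolding a_def b_def by (simp add: power_minus[of t] field_simps)
    qed
    then show ?thesis by (simp add: cc_def sum_distrib_right)
  qed
  have "suminf a * suminf b = (\<Sum>k. \<Sum>i\<le>k. a i * b (k - i))"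
    by (rule Cauchy_product[OF sa sb])
  also have "\<dots> = (\<Sum>k. cc j k * t ^ k)" by (simp add: inner)
  also have "\<dots> = (\<Sum>k\<le>j. cc j k * t ^ k)"
    by (rule suminf_finite) (auto simp: cc_zero)
  finally have "suminf a * exp (- t) = (\<Sum>k\<le>j. cc j k * t ^ k)"
    using bs by (simp add: sums_iff)
  then have "suminf a = exp t * (\<Sum>k\<le>j. cc j k * t ^ k)"
    by (metis exp_minus_inverse mult.commute mult.left_neutral mult.assoc)
  moreover have "summable a" using sa summable_norm_cancel by blast
  ultimately show ?thesis unfolding a_def by (simp add: sums_iff)
qed

lemma pBell_eq: "pBell j p = (\<Sum>k\<le>j. cc j k / real ((k + p) choose p))"
proof -
  define f where "f = (\<lambda>k. fps_const (1 / (real ((k + p) choose p) * fact k)) * (fps_exp (1::real) - 1) ^ k)"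
  have fn: "fps_nth (f k) n = cc n k / real ((k + p) choose p) / fact n" for k n
    by (simp add: f_def fps_coeff)
  have fz: "fps_nth (f k) n = 0" if "n < k" for k n
    using that by (simp add: fn cc_zero)
  define G where "G = Abs_fps (\<lambda>n. \<Sum>k\<le>n. fps_nth (f k) n)"
  have "(\<lambda>N. \<Sum>k<N. f k) \<longlonglongrightarrow> G"
  proof (rule tendsto_fpsI)
    fix n
    show "\<forall>\<^sub>F N in sequentially. fps_nth (\<Sum>k<N. f k) n = fps_nth G n"
      unfolding eventually_sequentially
    proof (intro exI allI impI)
      fix N assume "Suc n \<le> N"
      then have "fps_nth (\<Sum>k<N. f k) n = (\<Sum>k\<le>n. fps_nth (f k) n)"
        by (simp add: fps_sum_nth, intro sum.mono_neutral_right) (auto simp: fz)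
      then show "fps_nth (\<Sum>k<N. f k) n = fps_nth G n" by (simp add: G_def)
    qed
  qed
  then have "f sums G" by (simp add: sums_def)
  then have "pBell_egf p = G" unfolding pBell_egf_def f_def[symmetric] by (simp add: sums_iff)
  then show ?thesis
    by (simp add: pBell_def G_def fn sum_distrib_left)
qed

lemma beta_mom:
  assumes p: "1 \<le> p"
  shows "((\<lambda>t. real p * (1 - t) ^ (p - 1) * t ^ k) has_integral (1 / real ((k + p) choose p))) {0..1}"
proof -
  have "((\<lambda>t. t powr ((real k + 1) - 1) * (1 - t) powr (real p - 1)) has_integral Beta (real k + 1) (real p)) {0..1}"
    using p by (intro has_integral_Beta_real) auto
  then have "((\<lambda>t. t powr ((real k + 1) - 1) * (1 - t) powr (real p - 1)) has_integral Beta (real k + 1) (real p)) {0<..<1}"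
    by (simp add: has_integral_Icc_iff_Ioo)
  moreover have "t powr ((real k + 1) - 1) * (1 - t) powr (real p - 1) = (1 - t) ^ (p - 1) * t ^ k"
    if "t \<in> {0<..<1}" for t :: real
  proof -
    have t: "0 < t" "0 < 1 - t" using that by auto
    have e: "real p - 1 = real (p - 1)" using p by (simp add: of_nat_diff)
    have "(1 - t) powr (real p - 1) = (1 - t) ^ (p - 1)"
      unfolding e using t by (simp only: powr_realpow)
    moreover have "t powr ((real k + 1) - 1) = t ^ k" using t by (simp add: powr_realpow)
    ultimately show ?thesis by simp
  qed
  ultimately have "((\<lambda>t. (1 - t) ^ (p - 1) * t ^ k) has_integral Beta (real k + 1) (real p)) {0<..<1}"
    using has_integral_cong by (metis (no_types, lifting))
  then have "((\<lambda>t. (1 - t) ^ (p - 1) * t ^ k) has_integral Beta (real k + 1) (real p)) {0..1}"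
    by (simp add: has_integral_Icc_iff_Ioo)
  then have "((\<lambda>t. real p * ((1 - t) ^ (p - 1) * t ^ k)) has_integral (real p * Beta (real k + 1) (real p))) {0..1}"
    by (rule has_integral_mult_right)
  moreover have "real p * Beta (real k + 1) (real p) = 1 / real ((k + p) choose p)"
  proof -
    have g1: "Gamma (real k + 1) = fact k" using Gamma_fact[of k] by (simp add: add.commute)
    have g2: "Gamma (real p) = fact (p - 1)" using Gamma_fact[of "p - 1"] p by (simp add: of_nat_diff)
    have g3: "Gamma (real k + 1 + real p) = fact (k + p)" using Gamma_fact[of "k + p"] by (simp add: add_ac)
    have fp: "fact p = real p * fact (p - 1)" using p by (simp add: fact_reduce)
    have bf: "real ((k + p) choose p) = fact (k + p) / (fact p * fact k)"
      using binomial_fact[of p "k + p", where 'a=real] by simp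
    show ?thesis
      unfolding Beta_def g1 g2 g3 bf fp by (simp add: field_simps)
  qed
  ultimately show ?thesis by (simp add: mult_ac)
qed

lemma moment:
  fixes M :: "'a measure" and L :: "'a \<Rightarrow> real" and Z :: "'a \<Rightarrow> nat"
    and p j :: nat
  assumes p: "p \<ge> 1"
    and L: "L \<in> M \<rightarrow>\<^sub>M borel"
    and Z: "Z \<in> M \<rightarrow>\<^sub>M count_space UNIV"
    and D: "distr M (lborel \<Otimes>\<^sub>M count_space UNIV) (\<lambda>\<omega>. (L \<omega>, Z \<omega>)) =
         density (lborel \<Otimes>\<^sub>M count_space UNIV)
           (\<lambda>(t, k). ennreal (indicator {0..1} t * real p * (1 - t) ^ (p - 1)
                              * (t ^ k / fact k * exp (- t))))"
  shows "has_bochner_integral M (\<lambda>\<omega>. real (Z \<omega>) ^ j) (\<Sum>k\<le>j. cc j k / real ((k + p) choose p))"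
proof -
  define N :: "(real \<times> nat) measure" where "N = lborel \<Otimes>\<^sub>M count_space UNIV"
  define dens :: "real \<times> nat \<Rightarrow> ennreal" where "dens = (\<lambda>(t, k). ennreal (indicator {0..1} t * real p * (1 - t) ^ (p - 1)
                              * (t ^ k / fact k * exp (- t))))"
  define P where "P t = (\<Sum>k\<le>j. cc j k * t ^ k)" for t :: real
  define h where "h t = real p * (1 - t) ^ (p - 1) * P t" for t :: real
  define c where "c = (\<Sum>k\<le>j. cc j k / real ((k + p) choose p))"
  interpret cnt: sigma_finite_measure "count_space (UNIV :: nat set)"
    by (rule sigma_finite_measure_count_space_countable) simp
  have meas: "(\<lambda>\<omega>. (L \<omega>, Z \<omega>)) \<in> M \<rightarrow>\<^sub>M N"
    unfolding N_def using L Z by (auto intro!: measurable_Pair simp: measurable_lborel2)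
  have dens_meas: "dens \<in> borel_measurable N"
  proof -
    have "(\<lambda>x. (\<lambda>k (t, k'). ennreal (indicator {0..1} t * real p * (1 - t) ^ (p - 1)
                              * (t ^ k / fact k * exp (- t)))) (snd x) x) \<in> borel_measurable N"
      by (rule measurable_compose_countable[where g = snd]) (auto simp: N_def)
    then show ?thesis by (simp add: dens_def case_prod_beta)
  qed
  have gm: "(\<lambda>y. ennreal (real (snd y) ^ j)) \<in> borel_measurable N"
    unfolding N_def by measurable
  have P_nonneg: "0 \<le> P t" if "0 \<le> t" for t
  proof -
    have "exp t * P t = (\<Sum>m. real m ^ j * t ^ m / fact m)"
      using touchard[of j t] by (simp add: sums_iff P_def)
    also have "\<dots> \<ge> 0" using that touchard[of j t] by (intro suminf_nonneg) (auto simp: sums_iff)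
    finally show ?thesis by (simp add: zero_le_mult_iff)
  qed
  have h_nonneg: "0 \<le> h t" if "t \<in> {0..1}" for t
    using that P_nonneg by (auto simp: h_def)
  have inner: "(\<integral>\<^sup>+k. dens (t, k) * ennreal (real k ^ j) \<partial>count_space UNIV) = ennreal (h t) * indicator {0..1} t" for t
  proof (cases "t \<in> {0..1}")
    case False
    then show ?thesis by (simp add: dens_def)
  next
    case True
    define w where "w = real p * (1 - t) ^ (p - 1) * exp (- t)"
    have w: "0 \<le> w" using True by (auto simp: w_def)
    have "(\<integral>\<^sup>+k. dens (t, k) * ennreal (real k ^ j) \<partial>count_space UNIV)
        = (\<Sum>k. ennreal (w * (real k ^ j * t ^ k / fact k)))"
      unfolding nn_integral_count_space_nat
      by (intro suminf_cong) (use True in \<open>simp add: dens_def w_def ennreal_mult'' [symmetric] field_simps\<close>)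
    also have "\<dots> = ennreal (\<Sum>k. w * (real k ^ j * t ^ k / fact k))"
      using touchard[of j t] True w by (intro suminf_ennreal2 summable_mult) (auto simp: sums_iff)
    also have "(\<Sum>k. w * (real k ^ j * t ^ k / fact k)) = w * (exp t * P t)"
      using sums_mult[OF touchard[of j t], of w] by (simp add: sums_iff P_def)
    also have "\<dots> = h t" by (simp add: w_def h_def exp_minus field_simps)
    finally show ?thesis using True by simp
  qed
  have hint: "(h has_integral c) {0..1}"
  proof -
    have "((\<lambda>t. \<Sum>k\<le>j. cc j k * (real p * (1 - t) ^ (p - 1) * t ^ k)) has_integral
            (\<Sum>k\<le>j. cc j k * (1 / real ((k + p) choose p)))) {0..1}"
      by (intro has_integral_sum has_integral_mult_right beta_mom p) auto
    moreover have "(\<lambda>t. \<Sum>k\<le>j. cc j k * (real p * (1 - t) ^ (p - 1) * t ^ k)) = h"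
      by (rule ext) (simp add: h_def P_def sum_distrib_left mult_ac)
    ultimately show ?thesis by (simp add: c_def)
  qed
  have c_nonneg: "0 \<le> c"
    by (rule has_integral_nonneg[OF hint]) (use h_nonneg in auto)
  have "(\<integral>\<^sup>+\<omega>. ennreal (real (Z \<omega>) ^ j) \<partial>M) = (\<integral>\<^sup>+y. ennreal (real (snd y) ^ j) \<partial>distr M N (\<lambda>\<omega>. (L \<omega>, Z \<omega>)))"
    by (subst nn_integral_distr[OF meas]) (use gm in auto)
  also have "\<dots> = (\<integral>\<^sup>+y. ennreal (real (snd y) ^ j) \<partial>density N dens)"
    using D by (simp add: N_def dens_def)
  also have "\<dots> = (\<integral>\<^sup>+y. dens y * ennreal (real (snd y) ^ j) \<partial>N)"
    by (rule nn_integral_density[OF dens_meas gm])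
  also have "\<dots> = (\<integral>\<^sup>+t. \<integral>\<^sup>+k. dens (t, k) * ennreal (real k ^ j) \<partial>count_space UNIV \<partial>lborel)"
    unfolding N_def
    by (subst cnt.nn_integral_fst[symmetric]) (use dens_meas gm in \<open>auto simp: N_def\<close>)
  also have "\<dots> = (\<integral>\<^sup>+t. ennreal (h t) * indicator {0..1} t \<partial>lborel)"
    by (simp add: inner)
  also have "\<dots> = ennreal c"
    by (rule nn_integral_has_integral_lebesgue'[OF h_nonneg hint])
  finally have nn: "(\<integral>\<^sup>+\<omega>. ennreal (real (Z \<omega>) ^ j) \<partial>M) = ennreal c" .
  show ?thesis
    unfolding c_def[symmetric]
    by (rule has_bochner_integral_nn_integral[OF _ _ c_nonneg nn]) (use Z in auto)
qed

theorem mainTheorem16: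
  fixes M :: "'a measure" and L :: "'a \<Rightarrow> real" and Z :: "'a \<Rightarrow> nat"
    and p n :: nat and x :: real
  assumes "prob_space M"
    and "p \<ge> 1"
    and "L \<in> M \<rightarrow>\<^sub>M borel"
    and "Z \<in> M \<rightarrow>\<^sub>M count_space UNIV"
    and "distr M (lborel \<Otimes>\<^sub>M count_space UNIV) (\<lambda>\<omega>. (L \<omega>, Z \<omega>)) =
         density (lborel \<Otimes>\<^sub>M count_space UNIV)
           (\<lambda>(t, k). ennreal (indicator {0..1} t * real p * (1 - t) ^ (p - 1)
                              * (t ^ k / fact k * exp (- t))))"
  shows "pBell_poly n p x = prob_space.expectation M (\<lambda>\<omega>. (x + real (Z \<omega>)) ^ n)"
proof -
  have mom: "has_bochner_integral M (\<lambda>\<omega>. real (Z \<omega>) ^ j) (pBell j p)" for j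
    unfolding pBell_eq by (rule moment[OF assms(2-5)])
  have eq: "(\<lambda>\<omega>. (x + real (Z \<omega>)) ^ n) = (\<lambda>\<omega>. \<Sum>k\<le>n. real (n choose k) * x ^ (n - k) * real (Z \<omega>) ^ k)"
  proof (rule ext)
    fix \<omega>
    have "(x + real (Z \<omega>)) ^ n = (real (Z \<omega>) + x) ^ n" by (simp add: add.commute)
    also have "\<dots> = (\<Sum>k\<le>n. of_nat (n choose k) * real (Z \<omega>) ^ k * x ^ (n - k))"
      by (rule binomial_ring)
    finally show "(x + real (Z \<omega>)) ^ n = (\<Sum>k\<le>n. real (n choose k) * x ^ (n - k) * real (Z \<omega>) ^ k)"
      by (simp add: mult_ac)
  qed
  have "has_bochner_integral M (\<lambda>\<omega>. \<Sum>k\<le>n. real (n choose k) * x ^ (n - k) * real (Z \<omega>) ^ k)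
          (\<Sum>k\<le>n. real (n choose k) * x ^ (n - k) * pBell k p)"
    by (intro has_bochner_integral_sum has_bochner_integral_mult_right mom)
  then have "integral\<^sup>L M (\<lambda>\<omega>. (x + real (Z \<omega>)) ^ n) = (\<Sum>k\<le>n. real (n choose k) * x ^ (n - k) * pBell k p)"
    unfolding eq by (rule has_bochner_integral_integral_eq)
  also have "\<dots> = pBell_poly n p x"
    by (simp add: pBell_poly_def atLeast0AtMost mult_ac)
  finally show ?thesis by simp
qed
end
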